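(* Let $C\subseteq\{0,1\}^n$ be shortest-path closed and let $v\in C$ be a corner vertex of $C$. Then $C\setminus\{v\}$ is shortest-path closed.
   Context: For $C\subseteq\{0,1\}^n$, the one-inclusion graph $\Gamma(C)$ has vertex set $C$ and an edge between $u,v$ iff they differ in exactly one coordinate. A $k$-cube in $C$ is a set of $2^k$ points of $C$ agreeing outside some set of $k$ coordinates and taking all $2^k$ values on those coordinates. $C$ is shortest-path closed if for any $u,v\in C$, $\Gamma(C)$ contains a path from $u$ to $v$ of length $\|u-v\|_1$ (the Hamming distance). A vertex $v\in C$ is a corner vertex of $C$ if among all cubes contained in $C$ that contain $v$ there is a unique one $Q$ of maximum dimension, and all neighbours of $v$ in $\Gamma(C)$ lie in $Q$. *)

theory Defs
  imports Main
begin

text \<open>Points of the hypercube {0,1}^n are represented by their supports: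
  a point x is a set x \<subseteq> {0..<n} (coordinate i is 1 iff i \<in> x).\<close>

definition hamming :: "nat set \<Rightarrow> nat set \<Rightarrow> nat" where
  "hamming u v = card ((u - v) \<union> (v - u))"

definition adjacent :: "nat set \<Rightarrow> nat set \<Rightarrow> bool" where
  "adjacent u v \<longleftrightarrow> hamming u v = 1"

text \<open>A path in the one-inclusion graph of C from u to v of length (length ps - 1).\<close>
definition is_path :: "nat set set \<Rightarrow> nat set list \<Rightarrow> nat set \<Rightarrow> nat set \<Rightarrow> bool" where
  "is_path C ps u v \<longleftrightarrow> ps \<noteq> [] \<and> hd ps = u \<and> last ps = v \<and> set ps \<subseteq> C \<and>
     (\<forall>i. Suc i < length ps \<longrightarrow> adjacent (ps ! i) (ps ! Suc i))"

definition sp_closed :: "nat set set \<Rightarrow> bool" where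
  "sp_closed C \<longleftrightarrow> (\<forall>u\<in>C. \<forall>v\<in>C. \<exists>ps. is_path C ps u v \<and> length ps = hamming u v + 1)"

text \<open>Q is a k-cube of {0,1}^n: agrees outside a set S of k coordinates (S \<subseteq> {0..<n})
  and takes all 2^k values on S.\<close>
definition is_cube :: "nat \<Rightarrow> nat set set \<Rightarrow> nat \<Rightarrow> bool" where
  "is_cube n Q k \<longleftrightarrow> (\<exists>S b. S \<subseteq> {0..<n} \<and> card S = k \<and> b \<subseteq> {0..<n} \<and>
     Q = {x. x \<subseteq> {0..<n} \<and> x - S = b - S})"

definition corner_vertex :: "nat \<Rightarrow> nat set set \<Rightarrow> nat set \<Rightarrow> bool" where
  "corner_vertex n C v \<longleftrightarrow> v \<in> C \<and>
     (\<exists>Q k. is_cube n Q k \<and> Q \<subseteq> C \<and> v \<in> Q \<and>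
        (\<forall>Q' k'. is_cube n Q' k' \<and> Q' \<subseteq> C \<and> v \<in> Q' \<longrightarrow> k' \<le> k \<and> (k' = k \<longrightarrow> Q' = Q)) \<and>
        (\<forall>u\<in>C. adjacent v u \<longrightarrow> u \<in> Q))"

end

theory Submission
  imports Defs
begin

lemma ham_sym: "hamming x y = hamming y x"
  unfolding hamming_def by (simp add: Un_commute)

lemma ham_self: "hamming x x = 0"
  unfolding hamming_def by simp

lemma ham_0: "finite x \<Longrightarrow> finite y \<Longrightarrow> hamming x y = 0 \<Longrightarrow> x = y"
  unfolding hamming_def by auto

lemma ham_tri:
  assumes "finite x" "finite y" "finite z"
  shows "hamming x z \<le> hamming x y + hamming y z"
proof -
  have "hamming x z \<le> card (((x - y) \<union> (y - x)) \<union> ((y - z) \<union> (z - y)))"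
    unfolding hamming_def by (rule card_mono) (use assms in auto)
  also have "\<dots> \<le> hamming x y + hamming y z"
    unfolding hamming_def by (rule card_Un_le)
  finally show ?thesis .
qed

lemma path_le:
  assumes "is_path C ps u w" "\<forall>x\<in>C. finite x"
  shows "i \<le> j \<Longrightarrow> j < length ps \<Longrightarrow> hamming (ps!i) (ps!j) \<le> j - i"
proof (induction j)
  case 0
  then show ?case by (simp add: ham_self)
next
  case (Suc j)
  show ?case
  proof (cases "i = Suc j")
    case True
    then show ?thesis by (simp add: ham_self)
  next
    case False
    hence ij: "i \<le> j" using Suc by simp
    have IH: "hamming (ps!i) (ps!j) \<le> j - i" using Suc ij by simp
    have adj: "hamming (ps!j) (ps!Suc j) = 1" using assms(1) Suc(3)
      unfolding is_path_def adjacent_def by blast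
    have fin: "\<And>m. m < length ps \<Longrightarrow> finite (ps!m)"
      using assms unfolding is_path_def by (meson nth_mem subsetD)
    have "hamming (ps!i) (ps!Suc j) \<le> hamming (ps!i) (ps!j) + hamming (ps!j) (ps!Suc j)"
      by (rule ham_tri) (use fin Suc(3) ij in auto)
    then show ?thesis using IH adj ij by linarith
  qed
qed

lemma path_eq:
  assumes "is_path C ps u w" "\<forall>x\<in>C. finite x" "length ps = hamming u w + 1"
    "i \<le> j" "j < length ps"
  shows "hamming (ps!i) (ps!j) = j - i"
proof -
  have fin: "\<And>m. m < length ps \<Longrightarrow> finite (ps!m)"
    using assms unfolding is_path_def by (meson nth_mem subsetD)
  have u: "u = ps!0" and w: "w = ps!(length ps - 1)" and ne: "ps \<noteq> []"
    using assms(1) unfolding is_path_def by (auto simp: hd_conv_nth last_conv_nth)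
  have "hamming u w \<le> hamming u (ps!i) + hamming (ps!i) w"
  proof (rule ham_tri)
    show "finite u" unfolding u using fin ne by simp
    show "finite (ps!i)" using fin assms(4,5) by simp
    show "finite w" unfolding w using fin ne by simp
  qed
  also have "\<dots> \<le> hamming u (ps!i) + (hamming (ps!i) (ps!j) + hamming (ps!j) w)"
  proof -
    have f1: "finite (ps!i)" "finite (ps!j)" using fin assms(4,5) by auto
    have f2: "finite w" unfolding w using fin ne by simp
    show ?thesis using ham_tri[OF f1 f2] by simp
  qed
  finally have 1: "hamming u w \<le> hamming u (ps!i) + hamming (ps!i) (ps!j) + hamming (ps!j) w" by simp
  have 2: "hamming u (ps!i) \<le> i" using path_le[OF assms(1,2), of 0 i] assms(4,5) unfolding u by simp
  have 3: "hamming (ps!j) w \<le> length ps - 1 - j" using path_le[OF assms(1,2), of j "length ps - 1"] assms(4,5) unfolding w by simp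
  have 4: "hamming (ps!i) (ps!j) \<le> j - i" using path_le[OF assms(1,2)] assms(4,5) by simp
  show ?thesis using 1 2 3 4 assms(3,4,5) by linarith
qed

lemma ham1: "hamming x y = 1 \<Longrightarrow> \<exists>i. y = (x - {i}) \<union> ({i} - x)"
proof -
  assume "hamming x y = 1"
  then obtain i where i: "(x - y) \<union> (y - x) = {i}" unfolding hamming_def by (auto simp: card_1_singleton_iff)
  hence "y = (x - {i}) \<union> ({i} - x)" by blast
  thus ?thesis by blast
qed

lemma ham1': "hamming x ((x - {i}) \<union> ({i} - x)) = 1"
proof -
  have "(x - ((x - {i}) \<union> ({i} - x))) \<union> (((x - {i}) \<union> ({i} - x)) - x) = {i}" by blast
  thus ?thesis unfolding hamming_def by simp
qed

theorem lemma3: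
  fixes n :: nat and C :: "nat set set" and v :: "nat set"
  assumes "C \<subseteq> Pow {0..<n}"
    and "sp_closed C"
    and "corner_vertex n C v"
  shows "sp_closed (C - {v})"
  unfolding sp_closed_def
proof (intro ballI)
  fix u w assume uC: "u \<in> C - {v}" and wC: "w \<in> C - {v}"
  have finC: "\<forall>x\<in>C. finite x" using assms(1) by (meson PowD finite_atLeastLessThan rev_finite_subset subsetD)
  obtain ps where P: "is_path C ps u w" and L: "length ps = hamming u w + 1"
    using assms(2) uC wC unfolding sp_closed_def by blast
  have fin: "\<And>m. m < length ps \<Longrightarrow> finite (ps!m)"
    using P finC unfolding is_path_def by (meson nth_mem subsetD)
  have inC: "\<And>m. m < length ps \<Longrightarrow> ps!m \<in> C"
    using P unfolding is_path_def by (meson nth_mem subsetD)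
  have hu: "ps!0 = u" and hw: "ps!(length ps - 1) = w" and ne: "ps \<noteq> []"
    using P unfolding is_path_def by (auto simp: hd_conv_nth last_conv_nth)
  have adjP: "\<And>m. Suc m < length ps \<Longrightarrow> hamming (ps!m) (ps!Suc m) = 1"
    using P unfolding is_path_def adjacent_def by blast
  show "\<exists>ps. is_path (C - {v}) ps u w \<and> length ps = hamming u w + 1"
  proof (cases "v \<in> set ps")
    case False
    then show ?thesis using P L unfolding is_path_def by blast
  next
    case True
    then obtain k where k: "k < length ps" "ps!k = v" by (auto simp: in_set_conv_nth)
    have k0: "k \<noteq> 0" using k hu uC by auto
    have kL: "k \<noteq> length ps - 1" using k hw wC by auto
    define a where "a = ps!(k-1)"
    define b where "b = ps!(Suc k)"
    have ka: "Suc (k-1) = k" using k0 by simp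
    have kb: "Suc k < length ps" using k kL by simp
    have va: "hamming v a = 1" using adjP[of "k-1"] ka k unfolding a_def by (simp add: ham_sym)
    have vb: "hamming v b = 1" using adjP[of k] kb k unfolding b_def by simp
    have ab: "hamming a b = 2" using path_eq[OF P finC L, of "k-1" "Suc k"] kb k0 unfolding a_def b_def by simp
    have aC: "a \<in> C" and bC: "b \<in> C" using inC kb k unfolding a_def b_def by auto
    obtain Q kk where Q: "is_cube n Q kk" "Q \<subseteq> C" "v \<in> Q" and nb: "\<forall>u\<in>C. adjacent v u \<longrightarrow> u \<in> Q"
      using assms(3) unfolding corner_vertex_def by blast
    obtain S c where S: "S \<subseteq> {0..<n}" "Q = {x. x \<subseteq> {0..<n} \<and> x - S = c - S}"
      using Q(1) unfolding is_cube_def by blast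
    have aQ: "a \<in> Q" and bQ: "b \<in> Q" using nb aC bC va vb unfolding adjacent_def by auto
    obtain i where ai: "a = (v - {i}) \<union> ({i} - v)" using ham1[OF va] by blast
    obtain j where bj: "b = (v - {j}) \<union> ({j} - v)" using ham1[OF vb] by blast
    have vS: "v \<subseteq> {0..<n}" "v - S = c - S" using Q(3) S by auto
    have iS: "i \<in> S" using aQ vS S ai by blast
    have jS: "j \<in> S" using bQ vS S bj by blast
    have "i \<noteq> j"
    proof
      assume "i = j"
      hence "a = b" using ai bj by simp
      thus False using ab ham_self by simp
    qed
    define v' where "v' = (a - {j}) \<union> ({j} - a)"
    have e1: "v' - S = v - S" using iS jS unfolding v'_def ai by blast
    have e2: "v' \<subseteq> v \<union> {i, j}" unfolding v'_def ai by blast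
    have e3: "v' \<subseteq> {0..<n}" using e2 vS(1) iS jS S(1) by blast
    have v'Q: "v' \<in> Q" unfolding S(2) using e1 e3 vS(2) by simp
    have v'C: "v' \<in> C" using v'Q Q(2) by auto
    have v'v: "v' \<noteq> v" using \<open>i \<noteq> j\<close> unfolding v'_def ai by blast
    have av': "hamming a v' = 1" unfolding v'_def by (rule ham1')
    have v'b: "v' = (b - {i}) \<union> ({i} - b)" using \<open>i \<noteq> j\<close> unfolding v'_def ai bj by blast
    have v'b1: "hamming v' b = 1" using ham1'[of b i] v'b by (simp add: ham_sym)
    define qs where "qs = ps[k := v']"
    have notv: "\<And>m. m < length ps \<Longrightarrow> m \<noteq> k \<Longrightarrow> ps!m \<noteq> v"
    proof -
      fix m assume m: "m < length ps" "m \<noteq> k"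
      show "ps!m \<noteq> v"
      proof
        assume "ps!m = v"
        show False
        proof (cases "m < k")
          case True
          then show False using path_eq[OF P finC L, of m k] k \<open>ps!m = v\<close> ham_self by simp
        next
          case False
          then show False using path_eq[OF P finC L, of k m] k m \<open>ps!m = v\<close> ham_self by simp
        qed
      qed
    qed
    have "is_path (C - {v}) qs u w"
      unfolding is_path_def
    proof (intro conjI allI impI)
      show "qs \<noteq> []" using ne unfolding qs_def by simp
      show "hd qs = u" using hu k0 ne unfolding qs_def by (simp add: hd_conv_nth)
      show "last qs = w" using hw kL ne unfolding qs_def by (simp add: last_conv_nth)
      show "set qs \<subseteq> C - {v}"
      proof
        fix x assume "x \<in> set qs"
        then obtain m where m: "m < length qs" "qs!m = x" by (auto simp: in_set_conv_nth)
        show "x \<in> C - {v}"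
        proof (cases "m = k")
          case True then show ?thesis using m k v'C v'v unfolding qs_def by simp
        next
          case False then show ?thesis using m(1) False inC[of m] notv[of m] unfolding qs_def m(2)[symmetric] by simp
        qed
      qed
    next
      fix m assume m: "Suc m < length qs"
      show "adjacent (qs!m) (qs!Suc m)"
        unfolding adjacent_def
      proof (cases "m = k")
        case True then show "hamming (qs!m) (qs!Suc m) = 1"
          using v'b1 m k unfolding qs_def b_def by simp
      next
        case False
        show "hamming (qs!m) (qs!Suc m) = 1"
        proof (cases "Suc m = k")
          case True then show ?thesis using av' m k unfolding qs_def a_def
            by (metis diff_Suc_1 length_list_update lessI less_trans nat_neq_iff nth_list_update)
        next
          case False2: False
          then show ?thesis using False adjP m unfolding qs_def by simp
        qed
      qed
    qed
    moreover have "length qs = hamming u w + 1" using L unfolding qs_def by simp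
    ultimately show ?thesis by blast
  qed
qed

end
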